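(* Let $\mathsf{X}\subset\mathbb{R}^p$, $\mathsf{Y}\subset\mathbb{R}^q$, let $\tilde s(x\mid\gamma)$ and $\tilde h(\gamma\mid x)$ be conditional pdfs on $\mathsf{X}$ and $\mathsf{Y}$ respectively, and let $\{\Psi_m\}$ be the Markov chain on $\mathsf{X}$ with transition density $k(x,x')=\int_{\mathsf{Y}}\tilde s(x'\mid\gamma)\tilde h(\gamma\mid x)d\gamma$ (transition function $K$, invariant probability $\Pi$) and $\{\tilde\Psi_m\}$ the Markov chain on $\mathsf{Y}$ with transition density $\tilde k(\gamma,\gamma')=\int_{\mathsf{X}}\tilde h(\gamma'\mid x)\tilde s(x\mid\gamma)dx$ (transition function $\tilde K$, invariant probability $\tilde\Pi$), both Harris ergodic. Suppose there is $R:\mathsf{Y}\times\mathbb{Z}_+\to(0,\infty)$ such that for every initial distribution $\tilde\nu$ of $\tilde\Psi_0$ and all $m\ge0$, $\|\tilde\nu\tilde K^m-\tilde\Pi\|_{TV}\le\mathbb{E}_{\tilde\nu}R(\tilde\Psi_0,m)$. Then for every initial distribution $\nu$ of $\Psi_0$ and all $m\ge1$, $\|\nu K^m-\Pi\|_{TV}\le\mathbb{E}_\nu\Big(\int_{\mathsf{Y}}R(\gamma,m-1)\tilde h(\gamma\mid\Psi_0)d\gamma\Big)$.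
   Context: $\nu K^m(\cdot)=\int K^m(x,\cdot)\nu(dx)$; $\|\cdot\|_{TV}$ is the total variation norm, taken as the $L^1$ distance between densities (the same convention on both sides). *)

theory Defs
  imports "HOL-Probability.Probability"
begin

text \<open>Total variation distance between two probability measures, normalised as the
  L1 distance between densities, i.e. twice the supremum over measurable sets.\<close>
definition tv :: "'a measure \<Rightarrow> 'a measure \<Rightarrow> real" where
  "tv \<mu> \<nu> = 2 * (SUP A \<in> sets \<mu>. \<bar>measure \<mu> A - measure \<nu> A\<bar>)"

definition kstep :: "'a::euclidean_space set \<Rightarrow> ('a \<Rightarrow> 'a \<Rightarrow> ennreal) \<Rightarrow> 'a measure \<Rightarrow> 'a measure" where
  "kstep S \<kappa> \<mu> = density lborel (\<lambda>x'. indicator S x' * (\<integral>\<^sup>+ x. \<kappa> x x' \<partial>\<mu>))"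

definition kiter :: "'a::euclidean_space set \<Rightarrow> ('a \<Rightarrow> 'a \<Rightarrow> ennreal) \<Rightarrow> nat \<Rightarrow> 'a measure \<Rightarrow> 'a measure" where
  "kiter S \<kappa> m \<mu> = (kstep S \<kappa> ^^ m) \<mu>"

text \<open>Harris ergodicity with invariant probability PiX, in its standard equivalent form
  (Meyn--Tweedie Thm 13.0.1): PiX is an invariant probability on S and
  \<delta>_x K^n \<rightarrow> PiX in total variation for every starting point x in S.\<close>
definition harris_ergodic :: "'a::euclidean_space set \<Rightarrow> ('a \<Rightarrow> 'a \<Rightarrow> ennreal) \<Rightarrow> 'a measure \<Rightarrow> bool" where
  "harris_ergodic S \<kappa> PiX \<longleftrightarrow>
     prob_space PiX \<and> sets PiX = sets borel \<and> measure PiX S = 1 \<and>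
     kstep S \<kappa> PiX = PiX \<and>
     (\<forall>x\<in>S. (\<lambda>n. tv (kiter S \<kappa> n (return borel x)) PiX) \<longlonglongrightarrow> 0)"

text \<open>s \<gamma> x = s~(x | \<gamma>),  h x \<gamma> = h~(\<gamma> | x).\<close>
definition kX :: "'b::euclidean_space set \<Rightarrow> ('b \<Rightarrow> 'a \<Rightarrow> real) \<Rightarrow> ('a \<Rightarrow> 'b \<Rightarrow> real) \<Rightarrow> 'a \<Rightarrow> 'a \<Rightarrow> ennreal" where
  "kX Y s h x x' = (\<integral>\<^sup>+ \<gamma>. indicator Y \<gamma> * ennreal (s \<gamma> x' * h x \<gamma>) \<partial>lborel)"

definition kY :: "'a::euclidean_space set \<Rightarrow> ('b \<Rightarrow> 'a \<Rightarrow> real) \<Rightarrow> ('a \<Rightarrow> 'b \<Rightarrow> real) \<Rightarrow> 'b \<Rightarrow> 'b \<Rightarrow> ennreal" where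
  "kY X s h \<gamma> \<gamma>' = (\<integral>\<^sup>+ x. indicator X x * ennreal (h x \<gamma>' * s \<gamma> x) \<partial>lborel)"

end

theory Submission
  imports Defs
begin

definition kop :: "'b::euclidean_space set \<Rightarrow> ('a::euclidean_space \<Rightarrow> 'b \<Rightarrow> ennreal) \<Rightarrow> 'a measure \<Rightarrow> 'b measure" where
  "kop T \<kappa> \<mu> = density lborel (\<lambda>y. indicator T y * (\<integral>\<^sup>+ x. \<kappa> x y \<partial>\<mu>))"

lemma kstep_kop: "kstep S \<kappa> \<mu> = kop S \<kappa> \<mu>"
  unfolding kstep_def kop_def ..

lemma meas_pair_sets:
  assumes "sets M = sets A" "sets N = sets B" "f \<in> borel_measurable (A \<Otimes>\<^sub>M B)"
  shows "f \<in> borel_measurable (M \<Otimes>\<^sub>M N)"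
  using assms by (simp add: measurable_cong_sets[OF sets_pair_measure_cong[OF assms(1,2)] refl])

lemma kop_dens_meas:
  assumes sf: "sigma_finite_measure \<mu>" "sets \<mu> = sets borel"
    and \<kappa>: "case_prod \<kappa> \<in> borel_measurable (borel \<Otimes>\<^sub>M borel)" and T: "T \<in> sets borel"
  shows "(\<lambda>y. indicator T y * (\<integral>\<^sup>+ x. \<kappa> x y \<partial>\<mu>)) \<in> borel_measurable borel"
proof -
  interpret sigma_finite_measure \<mu> by fact
  have "(\<lambda>(y,x). \<kappa> x y) \<in> borel_measurable (borel \<Otimes>\<^sub>M borel)"
    using measurable_pair_swap[OF \<kappa>] by (simp add: case_prod_beta)
  then have "case_prod (\<lambda>y x. \<kappa> x y) \<in> borel_measurable (borel \<Otimes>\<^sub>M \<mu>)"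
    by (rule meas_pair_sets[rotated 2]) (auto simp: sf)
  then have "(\<lambda>y. \<integral>\<^sup>+ x. \<kappa> x y \<partial>\<mu>) \<in> borel_measurable borel"
    by (rule borel_measurable_nn_integral)
  then show ?thesis using T by (intro borel_measurable_times_ennreal borel_measurable_indicator)
qed

lemma kop_nn:
  assumes sf: "sigma_finite_measure \<mu>" "sets \<mu> = sets borel"
    and \<kappa>: "case_prod \<kappa> \<in> borel_measurable (borel \<Otimes>\<^sub>M borel)" and T: "T \<in> sets borel"
    and g: "g \<in> borel_measurable borel"
  shows "(\<integral>\<^sup>+y. g y \<partial>kop T \<kappa> \<mu>) = (\<integral>\<^sup>+x. (\<integral>\<^sup>+y. indicator T y * \<kappa> x y * g y \<partial>lborel) \<partial>\<mu>)"
proof -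
  interpret pair_sigma_finite \<mu> lborel
    using sf(1) by (simp add: pair_sigma_finite_def lborel.sigma_finite_measure_axioms)
  have d: "(\<lambda>y. indicator T y * (\<integral>\<^sup>+ x. \<kappa> x y \<partial>\<mu>)) \<in> borel_measurable lborel"
    using kop_dens_meas[OF sf \<kappa> T] by simp
  have g': "g \<in> borel_measurable lborel" using g by simp
  have "(\<integral>\<^sup>+y. g y \<partial>kop T \<kappa> \<mu>) = (\<integral>\<^sup>+y. (indicator T y * (\<integral>\<^sup>+ x. \<kappa> x y \<partial>\<mu>)) * g y \<partial>lborel)"
    unfolding kop_def by (rule nn_integral_density[OF d g'])
  have m1: "\<And>y. (\<lambda>x. \<kappa> x y) \<in> borel_measurable \<mu>"
  proof -
    fix y
    have "(\<lambda>(y,x). \<kappa> x y) \<in> borel_measurable (borel \<Otimes>\<^sub>M borel)"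
      using measurable_pair_swap[OF \<kappa>] by (simp add: case_prod_beta)
    from measurable_compose_Pair1[OF _ this, of y]
    have "(\<lambda>x. \<kappa> x y) \<in> borel_measurable borel" by simp
    then show "(\<lambda>x. \<kappa> x y) \<in> borel_measurable \<mu>" unfolding measurable_cong_sets[OF sf(2) refl] .
  qed
  have m2: "(\<lambda>(x,y). indicator T y * \<kappa> x y * g y) \<in> borel_measurable (\<mu> \<Otimes>\<^sub>M lborel)"
  proof (rule meas_pair_sets[OF sf(2) sets_lborel])
    have 1: "(\<lambda>p. indicator T (snd p)) \<in> borel_measurable (borel \<Otimes>\<^sub>M borel)"
      by (rule measurable_compose[OF measurable_snd borel_measurable_indicator[OF T]])
    have 2: "(\<lambda>p. g (snd p)) \<in> borel_measurable (borel \<Otimes>\<^sub>M borel)"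
      by (rule measurable_compose[OF measurable_snd g])
    have "(\<lambda>p. indicator T (snd p) * case_prod \<kappa> p * g (snd p)) \<in> borel_measurable (borel \<Otimes>\<^sub>M borel)"
      by (intro borel_measurable_times_ennreal 1 2 \<kappa>)
    then show "(\<lambda>(x,y). indicator T y * \<kappa> x y * g y) \<in> borel_measurable (borel \<Otimes>\<^sub>M borel)"
      by (simp add: case_prod_beta')
  qed
  have "(\<integral>\<^sup>+y. g y \<partial>kop T \<kappa> \<mu>) = (\<integral>\<^sup>+y. (indicator T y * (\<integral>\<^sup>+ x. \<kappa> x y \<partial>\<mu>)) * g y \<partial>lborel)"
    unfolding kop_def by (rule nn_integral_density[OF d g'])
  also have "\<dots> = (\<integral>\<^sup>+y. (\<integral>\<^sup>+ x. indicator T y * \<kappa> x y * g y \<partial>\<mu>) \<partial>lborel)"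
  proof (rule nn_integral_cong)
    fix y
    have "(indicator T y * (\<integral>\<^sup>+ x. \<kappa> x y \<partial>\<mu>)) * g y = (\<integral>\<^sup>+ x. indicator T y * \<kappa> x y \<partial>\<mu>) * g y"
      by (subst nn_integral_cmult[OF m1]) (rule refl)
    also have "\<dots> = (\<integral>\<^sup>+ x. indicator T y * \<kappa> x y * g y \<partial>\<mu>)"
      by (rule nn_integral_multc[symmetric]) (intro borel_measurable_times_ennreal borel_measurable_const m1)
    finally show "(indicator T y * (\<integral>\<^sup>+ x. \<kappa> x y \<partial>\<mu>)) * g y = (\<integral>\<^sup>+ x. indicator T y * \<kappa> x y * g y \<partial>\<mu>)" .
  qed
  also have "\<dots> = (\<integral>\<^sup>+x. (\<integral>\<^sup>+y. indicator T y * \<kappa> x y * g y \<partial>lborel) \<partial>\<mu>)"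
    using Fubini'[OF m2] .
  finally show ?thesis .
qed

definition good :: "'a::euclidean_space set \<Rightarrow> 'a measure \<Rightarrow> bool" where
  "good S \<mu> \<longleftrightarrow> prob_space \<mu> \<and> sets \<mu> = sets borel \<and> emeasure \<mu> S = 1"

lemma good_AE: assumes "good S \<mu>" "S \<in> sets borel" shows "AE x in \<mu>. x \<in> S"
proof -
  interpret prob_space \<mu> using assms by (simp add: good_def)
  have "S \<in> sets \<mu>" using assms by (simp add: good_def)
  moreover have "prob S = 1" using assms by (simp add: good_def emeasure_eq_measure)
  ultimately show ?thesis using AE_in_set_eq_1 by blast
qed

lemma good_sf: "good S \<mu> \<Longrightarrow> sigma_finite_measure \<mu>"
  by (simp add: good_def prob_space_imp_sigma_finite)

lemma good_sets: "good S \<mu> \<Longrightarrow> sets \<mu> = sets borel"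
  by (simp add: good_def)

lemma sets_kop[simp]: "sets (kop T \<kappa> \<mu>) = sets borel"
  by (simp add: kop_def)

lemma space_kop[simp]: "space (kop T \<kappa> \<mu>) = UNIV"
  by (simp add: kop_def)

lemma kop_good:
  assumes g: "good S \<mu>" and S: "S \<in> sets borel" and T: "T \<in> sets borel"
    and \<kappa>: "case_prod \<kappa> \<in> borel_measurable (borel \<Otimes>\<^sub>M borel)"
    and pdf: "\<And>x. x \<in> S \<Longrightarrow> (\<integral>\<^sup>+y. indicator T y * \<kappa> x y \<partial>lborel) = 1"
  shows "good T (kop T \<kappa> \<mu>)"
proof -
  have sf: "sigma_finite_measure \<mu>" "sets \<mu> = sets borel" using g by (auto simp: good_sf good_sets)
  have AE: "AE x in \<mu>. x \<in> S" by (rule good_AE[OF g S])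
  have one: "(\<integral>\<^sup>+x. 1 \<partial>\<mu>) = 1" using g by (simp add: good_def prob_space.emeasure_space_1)
  have e1: "emeasure (kop T \<kappa> \<mu>) UNIV = 1"
  proof -
    have "emeasure (kop T \<kappa> \<mu>) UNIV = (\<integral>\<^sup>+y. indicator UNIV y \<partial>kop T \<kappa> \<mu>)"
      by simp
    also have "\<dots> = (\<integral>\<^sup>+x. (\<integral>\<^sup>+y. indicator T y * \<kappa> x y * indicator UNIV y \<partial>lborel) \<partial>\<mu>)"
      by (rule kop_nn[OF sf \<kappa> T]) simp
    also have "\<dots> = (\<integral>\<^sup>+x. 1 \<partial>\<mu>)"
      by (rule nn_integral_cong_AE) (use AE in \<open>auto simp: pdf\<close>)
    finally show ?thesis using one by simp
  qed
  have e2: "emeasure (kop T \<kappa> \<mu>) T = 1"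
  proof -
    have "emeasure (kop T \<kappa> \<mu>) T = (\<integral>\<^sup>+y. indicator T y \<partial>kop T \<kappa> \<mu>)"
      using T by simp
    also have "\<dots> = (\<integral>\<^sup>+x. (\<integral>\<^sup>+y. indicator T y * \<kappa> x y * indicator T y \<partial>lborel) \<partial>\<mu>)"
      by (rule kop_nn[OF sf \<kappa> T]) (use T in simp)
    also have "\<dots> = (\<integral>\<^sup>+x. 1 \<partial>\<mu>)"
    proof (rule nn_integral_cong_AE)
      show "AE x in \<mu>. (\<integral>\<^sup>+y. indicator T y * \<kappa> x y * indicator T y \<partial>lborel) = 1"
      proof (rule AE_mp[OF AE], rule AE_I2, rule impI)
        fix x assume "x \<in> S"
        have "(\<integral>\<^sup>+y. indicator T y * \<kappa> x y * indicator T y \<partial>lborel) = (\<integral>\<^sup>+y. indicator T y * \<kappa> x y \<partial>lborel)"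
          by (rule nn_integral_cong) (simp split: split_indicator)
        then show "(\<integral>\<^sup>+y. indicator T y * \<kappa> x y * indicator T y \<partial>lborel) = 1" using pdf[OF \<open>x \<in> S\<close>] by simp
      qed
    qed
    finally show ?thesis using one by simp
  qed
  have "prob_space (kop T \<kappa> \<mu>)" by (rule prob_spaceI) (simp add: e1)
  then show ?thesis using e2 by (simp add: good_def)
qed

lemma slice1: "case_prod f \<in> borel_measurable (borel \<Otimes>\<^sub>M borel) \<Longrightarrow> (\<lambda>x. f x y) \<in> borel_measurable borel"
  using measurable_compose[OF measurable_Pair2'[of y borel borel]] by simp

lemma slice2: "case_prod f \<in> borel_measurable (borel \<Otimes>\<^sub>M borel) \<Longrightarrow> (\<lambda>y. f x y) \<in> borel_measurable borel"
  using measurable_compose_Pair1[of x borel "case_prod f" borel] by simp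

lemma meas_real_pair:
  fixes f :: "'a::euclidean_space \<Rightarrow> 'b::euclidean_space \<Rightarrow> real"
  assumes "(\<lambda>(x, y). f x y) \<in> borel_measurable borel"
  shows "case_prod (\<lambda>x y. ennreal (f x y)) \<in> borel_measurable (borel \<Otimes>\<^sub>M borel)"
proof -
  have "(\<lambda>(x, y). f x y) \<in> borel_measurable (borel \<Otimes>\<^sub>M borel)" using assms by (simp add: borel_prod)
  then have "(\<lambda>p. ennreal ((\<lambda>(x, y). f x y) p)) \<in> borel_measurable (borel \<Otimes>\<^sub>M borel)"
    by (rule measurable_compose) (rule measurable_ennreal)
  then show ?thesis by (simp add: case_prod_beta')
qed

locale setting =
  fixes X :: "'a::euclidean_space set" and Y :: "'b::euclidean_space set"
    and s :: "'b \<Rightarrow> 'a \<Rightarrow> real" and h :: "'a \<Rightarrow> 'b \<Rightarrow> real"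
  assumes X: "X \<in> sets borel" and Y: "Y \<in> sets borel"
    and s_meas: "(\<lambda>(\<gamma>, x). s \<gamma> x) \<in> borel_measurable borel"
    and h_meas: "(\<lambda>(x, \<gamma>). h x \<gamma>) \<in> borel_measurable borel"
    and s_nonneg: "\<And>\<gamma> x. s \<gamma> x \<ge> 0" and h_nonneg: "\<And>x \<gamma>. h x \<gamma> \<ge> 0"
    and s_pdf: "\<And>\<gamma>. \<gamma> \<in> Y \<Longrightarrow> (\<integral>\<^sup>+ x. indicator X x * ennreal (s \<gamma> x) \<partial>lborel) = 1"
    and h_pdf: "\<And>x. x \<in> X \<Longrightarrow> (\<integral>\<^sup>+ \<gamma>. indicator Y \<gamma> * ennreal (h x \<gamma>) \<partial>lborel) = 1"
begin

definition "Sop = kop X (\<lambda>\<gamma> x. ennreal (s \<gamma> x))"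
definition "Hop = kop Y (\<lambda>x \<gamma>. ennreal (h x \<gamma>))"

lemma sm: "case_prod (\<lambda>\<gamma> x. ennreal (s \<gamma> x)) \<in> borel_measurable (borel \<Otimes>\<^sub>M borel)"
  by (rule meas_real_pair[OF s_meas])
lemma hm: "case_prod (\<lambda>x \<gamma>. ennreal (h x \<gamma>)) \<in> borel_measurable (borel \<Otimes>\<^sub>M borel)"
  by (rule meas_real_pair[OF h_meas])

lemma H_good: "good X \<nu> \<Longrightarrow> good Y (Hop \<nu>)"
  unfolding Hop_def by (rule kop_good[OF _ X Y hm h_pdf])
lemma S_good: "good Y \<mu> \<Longrightarrow> good X (Sop \<mu>)"
  unfolding Sop_def by (rule kop_good[OF _ Y X sm s_pdf])

lemma C1: assumes g: "good X \<nu>" shows "kstep X (kX Y s h) \<nu> = Sop (Hop \<nu>)"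
proof -
  have sf: "sigma_finite_measure \<nu>" "sets \<nu> = sets borel" using g by (auto simp: good_sf good_sets)
  have "\<And>x'. (\<integral>\<^sup>+\<gamma>. ennreal (s \<gamma> x') \<partial>Hop \<nu>) = (\<integral>\<^sup>+x. kX Y s h x x' \<partial>\<nu>)"
  proof -
    fix x'
    have "(\<integral>\<^sup>+\<gamma>. ennreal (s \<gamma> x') \<partial>Hop \<nu>) = (\<integral>\<^sup>+x. (\<integral>\<^sup>+\<gamma>. indicator Y \<gamma> * ennreal (h x \<gamma>) * ennreal (s \<gamma> x') \<partial>lborel) \<partial>\<nu>)"
      unfolding Hop_def by (rule kop_nn[OF sf hm Y slice1[OF sm]])
    also have "\<dots> = (\<integral>\<^sup>+x. kX Y s h x x' \<partial>\<nu>)"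
      unfolding kX_def
      by (intro nn_integral_cong) (simp add: ennreal_mult s_nonneg h_nonneg mult.commute mult.left_commute)
    finally show "(\<integral>\<^sup>+\<gamma>. ennreal (s \<gamma> x') \<partial>Hop \<nu>) = (\<integral>\<^sup>+x. kX Y s h x x' \<partial>\<nu>)" .
  qed
  then show ?thesis unfolding kstep_kop Sop_def kop_def[of X] by (simp only:)
qed

lemma C2: assumes g: "good Y \<mu>" shows "kstep Y (kY X s h) \<mu> = Hop (Sop \<mu>)"
proof -
  have sf: "sigma_finite_measure \<mu>" "sets \<mu> = sets borel" using g by (auto simp: good_sf good_sets)
  have "\<And>y. (\<integral>\<^sup>+x. ennreal (h x y) \<partial>Sop \<mu>) = (\<integral>\<^sup>+\<gamma>. kY X s h \<gamma> y \<partial>\<mu>)"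
  proof -
    fix y
    have "(\<integral>\<^sup>+x. ennreal (h x y) \<partial>Sop \<mu>) = (\<integral>\<^sup>+\<gamma>. (\<integral>\<^sup>+x. indicator X x * ennreal (s \<gamma> x) * ennreal (h x y) \<partial>lborel) \<partial>\<mu>)"
      unfolding Sop_def by (rule kop_nn[OF sf sm X slice1[OF hm]])
    also have "\<dots> = (\<integral>\<^sup>+\<gamma>. kY X s h \<gamma> y \<partial>\<mu>)"
      unfolding kY_def
      by (intro nn_integral_cong) (simp add: ennreal_mult s_nonneg h_nonneg mult.commute mult.left_commute)
    finally show "(\<integral>\<^sup>+x. ennreal (h x y) \<partial>Sop \<mu>) = (\<integral>\<^sup>+\<gamma>. kY X s h \<gamma> y \<partial>\<mu>)" .
  qed
  then show ?thesis unfolding kstep_kop Hop_def kop_def[of Y] by (simp only:)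
qed

end

context setting begin

abbreviation "KX \<equiv> kstep X (kX Y s h)"
abbreviation "KY \<equiv> kstep Y (kY X s h)"

lemma KX_good: "good X \<nu> \<Longrightarrow> good X (KX \<nu>)"
  using C1 H_good S_good by simp
lemma KY_good: "good Y \<mu> \<Longrightarrow> good Y (KY \<mu>)"
  using C2 H_good S_good by simp

lemma KX_iter_good: "good X \<nu> \<Longrightarrow> good X ((KX ^^ n) \<nu>)"
  by (induction n) (auto intro: KX_good)
lemma KY_iter_good: "good Y \<nu> \<Longrightarrow> good Y ((KY ^^ n) \<nu>)"
  by (induction n) (auto intro: KY_good)

lemma kiter_X_eq: "good X \<nu> \<Longrightarrow> kiter X (kX Y s h) (Suc n) \<nu> = Sop (kiter Y (kY X s h) n (Hop \<nu>))"
proof (induction n arbitrary: \<nu>)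
  case 0
  then show ?case by (simp add: kiter_def C1)
next
  case (Suc n)
  have "kiter X (kX Y s h) (Suc (Suc n)) \<nu> = kiter X (kX Y s h) (Suc n) (KX \<nu>)"
    unfolding kiter_def by (simp only: funpow_Suc_right o_apply)
  also have "\<dots> = Sop (kiter Y (kY X s h) n (Hop (KX \<nu>)))"
    by (rule Suc.IH[OF KX_good[OF Suc.prems]])
  also have "Hop (KX \<nu>) = KY (Hop \<nu>)"
    using C1[OF Suc.prems] C2[OF H_good[OF Suc.prems]] by simp
  also have "kiter Y (kY X s h) n (KY (Hop \<nu>)) = kiter Y (kY X s h) (Suc n) (Hop \<nu>)"
    unfolding kiter_def by (simp only: funpow_Suc_right o_apply)
  finally show ?case .
qed

lemma kiterY_H: "good X \<nu> \<Longrightarrow> \<exists>\<rho>. good X \<rho> \<and> kiter Y (kY X s h) n (Hop \<nu>) = Hop \<rho>"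
proof (induction n)
  case 0
  then show ?case by (auto simp: kiter_def)
next
  case (Suc n)
  then obtain \<rho> where r: "good X \<rho>" "kiter Y (kY X s h) n (Hop \<nu>) = Hop \<rho>" by blast
  have "kiter Y (kY X s h) (Suc n) (Hop \<nu>) = KY (Hop \<rho>)"
    using r(2) unfolding kiter_def by simp
  also have "\<dots> = Hop (Sop (Hop \<rho>))" by (rule C2[OF H_good[OF r(1)]])
  finally show ?case using S_good[OF H_good[OF r(1)]] by blast
qed

end

lemma enn_arith:
  fixes a b c1 c2 d :: ennreal
  assumes "a \<le> b + d" "c1 = c2 + d" "c1 < top" "b < top"
  shows "enn2real a - enn2real b \<le> enn2real c1 - enn2real c2"
proof -
  have "d < top" "c2 < top" using assms by (auto simp: top_unique)
  then obtain rb rd rc2 where r: "rb \<ge> 0" "rd \<ge> 0" "rc2 \<ge> 0" "b = ennreal rb" "d = ennreal rd" "c2 = ennreal rc2"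
    using assms(4) unfolding less_top_ennreal by blast
  then have "a \<le> ennreal (rb + rd)" using assms(1) by (simp add: ennreal_plus)
  then have "enn2real a \<le> rb + rd" using r by (intro enn2real_leI) auto
  moreover have "enn2real c1 = rc2 + rd" using r assms(2) by (simp flip: ennreal_plus)
  ultimately show ?thesis using r by simp
qed

lemma AL:
  fixes g1 g2 f :: "'b::euclidean_space \<Rightarrow> ennreal"
  assumes m1: "g1 \<in> borel_measurable borel" and m2: "g2 \<in> borel_measurable borel"
    and mf: "f \<in> borel_measurable borel"
    and f1: "\<And>\<gamma>. f \<gamma> \<le> 1 \<or> (g1 \<gamma> = 0 \<and> g2 \<gamma> = 0)"
    and p1: "prob_space (density lborel g1)" and p2: "prob_space (density lborel g2)"
  shows "enn2real (\<integral>\<^sup>+\<gamma>. g1 \<gamma> * f \<gamma> \<partial>lborel) - enn2real (\<integral>\<^sup>+\<gamma>. g2 \<gamma> * f \<gamma> \<partial>lborel)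
     \<le> (SUP B\<in>sets borel. \<bar>measure (density lborel g1) B - measure (density lborel g2) B\<bar>)"
proof -
  define B where "B = {\<gamma>. g2 \<gamma> < g1 \<gamma>}"
  define d where "d = (\<lambda>\<gamma>. indicator B \<gamma> * (g1 \<gamma> - g2 \<gamma>))"
  have Bm: "B \<in> sets borel" unfolding B_def using borel_measurable_less[OF m2 m1] by simp
  have m1': "g1 \<in> borel_measurable lborel" and m2': "g2 \<in> borel_measurable lborel"
    and mf': "f \<in> borel_measurable lborel" using m1 m2 mf by auto
  have dm: "d \<in> borel_measurable lborel" unfolding d_def
    by (intro borel_measurable_times_ennreal borel_measurable_minus_ennreal borel_measurable_indicator m1' m2') (simp add: Bm)
  have P1: "\<And>\<gamma>. g1 \<gamma> * f \<gamma> \<le> g2 \<gamma> * f \<gamma> + d \<gamma>"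
  proof -
    fix \<gamma>
    show "g1 \<gamma> * f \<gamma> \<le> g2 \<gamma> * f \<gamma> + d \<gamma>"
    proof (cases "\<gamma> \<in> B")
      case True
      then have lt: "g2 \<gamma> \<le> g1 \<gamma>" by (simp add: B_def)
      have "g1 \<gamma> * f \<gamma> = (g2 \<gamma> + (g1 \<gamma> - g2 \<gamma>)) * f \<gamma>" by (simp only: add_diff_inverse_ennreal[OF lt])
      also have "\<dots> = g2 \<gamma> * f \<gamma> + (g1 \<gamma> - g2 \<gamma>) * f \<gamma>" by (simp add: distrib_right)
      also have "(g1 \<gamma> - g2 \<gamma>) * f \<gamma> \<le> (g1 \<gamma> - g2 \<gamma>)"
      proof (cases "f \<gamma> \<le> 1")
        case True then show ?thesis using mult_left_mono[OF True, of "g1 \<gamma> - g2 \<gamma>"] by simp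
      next
        case False then have "g1 \<gamma> = 0 \<and> g2 \<gamma> = 0" using f1 by blast
        then show ?thesis by simp
      qed
      finally show ?thesis using True by (simp add: d_def add_left_mono)
    next
      case False
      then have "g1 \<gamma> \<le> g2 \<gamma>" by (simp add: B_def not_less)
      then have "g1 \<gamma> * f \<gamma> \<le> g2 \<gamma> * f \<gamma>" by (rule mult_right_mono) simp
      then show ?thesis by (simp add: d_def False)
    qed
  qed
  have P2: "\<And>\<gamma>. g1 \<gamma> * indicator B \<gamma> = g2 \<gamma> * indicator B \<gamma> + d \<gamma>"
  proof -
    fix \<gamma>
    show "g1 \<gamma> * indicator B \<gamma> = g2 \<gamma> * indicator B \<gamma> + d \<gamma>"
    proof (cases "\<gamma> \<in> B")
      case True
      then have lt: "g2 \<gamma> \<le> g1 \<gamma>" by (simp add: B_def)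
      show ?thesis using True by (simp add: d_def add_diff_inverse_ennreal[OF lt])
    qed (simp add: d_def)
  qed
  have I1: "(\<integral>\<^sup>+\<gamma>. g1 \<gamma> * f \<gamma> \<partial>lborel) \<le> (\<integral>\<^sup>+\<gamma>. g2 \<gamma> * f \<gamma> \<partial>lborel) + (\<integral>\<^sup>+\<gamma>. d \<gamma> \<partial>lborel)"
  proof -
    have "(\<integral>\<^sup>+\<gamma>. g1 \<gamma> * f \<gamma> \<partial>lborel) \<le> (\<integral>\<^sup>+\<gamma>. g2 \<gamma> * f \<gamma> + d \<gamma> \<partial>lborel)"
      by (rule nn_integral_mono) (rule P1)
    also have "\<dots> = (\<integral>\<^sup>+\<gamma>. g2 \<gamma> * f \<gamma> \<partial>lborel) + (\<integral>\<^sup>+\<gamma>. d \<gamma> \<partial>lborel)"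
      by (rule nn_integral_add) (intro borel_measurable_times_ennreal m2' mf', rule dm)
    finally show ?thesis .
  qed
  have E1: "emeasure (density lborel g1) B = emeasure (density lborel g2) B + (\<integral>\<^sup>+\<gamma>. d \<gamma> \<partial>lborel)"
  proof -
    have "emeasure (density lborel g1) B = (\<integral>\<^sup>+\<gamma>. g1 \<gamma> * indicator B \<gamma> \<partial>lborel)"
      using Bm by (intro emeasure_density m1') simp
    also have "\<dots> = (\<integral>\<^sup>+\<gamma>. g2 \<gamma> * indicator B \<gamma> + d \<gamma> \<partial>lborel)"
      by (rule nn_integral_cong) (rule P2)
    also have "\<dots> = (\<integral>\<^sup>+\<gamma>. g2 \<gamma> * indicator B \<gamma> \<partial>lborel) + (\<integral>\<^sup>+\<gamma>. d \<gamma> \<partial>lborel)"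
      using Bm by (intro nn_integral_add borel_measurable_times_ennreal m2' borel_measurable_indicator dm) simp
    also have "(\<integral>\<^sup>+\<gamma>. g2 \<gamma> * indicator B \<gamma> \<partial>lborel) = emeasure (density lborel g2) B"
      using Bm by (intro emeasure_density[symmetric] m2') simp
    finally show ?thesis .
  qed
  have fin1: "emeasure (density lborel g1) B < top"
    using prob_space.emeasure_le_1[OF p1, of B] by (simp add: order.strict_trans1)
  have "(\<integral>\<^sup>+\<gamma>. g2 \<gamma> * f \<gamma> \<partial>lborel) \<le> (\<integral>\<^sup>+\<gamma>. g2 \<gamma> \<partial>lborel)"
  proof (rule nn_integral_mono)
    fix \<gamma> show "g2 \<gamma> * f \<gamma> \<le> g2 \<gamma>"
      using f1[of \<gamma>] mult_left_mono[of "f \<gamma>" 1 "g2 \<gamma>"] by auto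
  qed
  also have "(\<integral>\<^sup>+\<gamma>. g2 \<gamma> \<partial>lborel) = emeasure (density lborel g2) UNIV"
    using emeasure_density[OF m2', of UNIV] by simp
  also have "\<dots> < top" using prob_space.emeasure_le_1[OF p2, of UNIV] by (simp add: order.strict_trans1)
  finally have fin2: "(\<integral>\<^sup>+\<gamma>. g2 \<gamma> * f \<gamma> \<partial>lborel) < top" .
  have "enn2real (\<integral>\<^sup>+\<gamma>. g1 \<gamma> * f \<gamma> \<partial>lborel) - enn2real (\<integral>\<^sup>+\<gamma>. g2 \<gamma> * f \<gamma> \<partial>lborel)
      \<le> enn2real (emeasure (density lborel g1) B) - enn2real (emeasure (density lborel g2) B)"
    by (rule enn_arith[OF I1 E1 fin1 fin2])
  also have "\<dots> = measure (density lborel g1) B - measure (density lborel g2) B"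
    by (simp add: measure_def)
  also have "\<dots> \<le> \<bar>measure (density lborel g1) B - measure (density lborel g2) B\<bar>" by simp
  also have "\<dots> \<le> (SUP B\<in>sets borel. \<bar>measure (density lborel g1) B - measure (density lborel g2) B\<bar>)"
  proof (rule cSUP_upper[OF Bm])
    show "bdd_above ((\<lambda>B. \<bar>measure (density lborel g1) B - measure (density lborel g2) B\<bar>) ` sets borel)"
    proof (rule bdd_aboveI2)
      fix A
      have "measure (density lborel g1) A \<le> 1" "measure (density lborel g2) A \<le> 1"
        using prob_space.prob_le_1[OF p1] prob_space.prob_le_1[OF p2] by auto
      then show "\<bar>measure (density lborel g1) A - measure (density lborel g2) A\<bar> \<le> 1"
        by (simp add: abs_le_iff) (smt (verit) measure_nonneg)
    qed
  qed
  finally show ?thesis .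
qed

lemma mprod:
  fixes \<kappa> :: "'a::euclidean_space \<Rightarrow> 'b::euclidean_space \<Rightarrow> ennreal"
  assumes \<kappa>: "case_prod \<kappa> \<in> borel_measurable (borel \<Otimes>\<^sub>M borel)" and T: "T \<in> sets borel"
    and g: "g \<in> borel_measurable borel"
  shows "(\<lambda>(x,y). indicator T y * \<kappa> x y * g y) \<in> borel_measurable (borel \<Otimes>\<^sub>M borel)"
proof -
  have 1: "(\<lambda>p. indicator T (snd p)) \<in> borel_measurable (borel \<Otimes>\<^sub>M borel)"
    by (rule measurable_compose[OF measurable_snd borel_measurable_indicator[OF T]])
  have 2: "(\<lambda>p. g (snd p)) \<in> borel_measurable (borel \<Otimes>\<^sub>M borel)"
    by (rule measurable_compose[OF measurable_snd g])
  have "(\<lambda>p. indicator T (snd p) * case_prod \<kappa> p * g (snd p)) \<in> borel_measurable (borel \<Otimes>\<^sub>M borel)"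
    by (intro borel_measurable_times_ennreal 1 2 \<kappa>)
  then show ?thesis by (simp add: case_prod_beta')
qed

lemma int_meas:
  assumes "case_prod F \<in> borel_measurable (borel \<Otimes>\<^sub>M borel)"
  shows "(\<lambda>x. \<integral>\<^sup>+y. F x y \<partial>lborel) \<in> borel_measurable borel"
proof -
  have "case_prod F \<in> borel_measurable (borel \<Otimes>\<^sub>M lborel)"
    by (rule meas_pair_sets[OF refl sets_lborel assms])
  then show ?thesis by (rule lborel.borel_measurable_nn_integral)
qed

context setting begin

definition "gH a = (\<lambda>\<gamma>. indicator Y \<gamma> * (\<integral>\<^sup>+ x. ennreal (h x \<gamma>) \<partial>a))"

lemma Hop_dens: "Hop a = density lborel (gH a)"
  by (simp add: Hop_def kop_def gH_def)

lemma gH_meas: "good X a \<Longrightarrow> gH a \<in> borel_measurable borel"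
  unfolding gH_def by (rule kop_dens_meas[OF good_sf good_sets hm Y])

lemma contr:
  assumes a: "good X a" and b: "good X b"
  shows "tv (Sop (Hop a)) (Sop (Hop b)) \<le> tv (Hop a) (Hop b)"
proof -
  define g1 where "g1 = gH a"
  define g2 where "g2 = gH b"
  have m1: "g1 \<in> borel_measurable borel" using gH_meas[OF a] by (simp add: g1_def)
  have m2: "g2 \<in> borel_measurable borel" using gH_meas[OF b] by (simp add: g2_def)
  have ga: "good Y (Hop a)" and gb: "good Y (Hop b)" using H_good a b by auto
  have p1: "prob_space (density lborel g1)" using ga by (simp add: good_def Hop_dens g1_def)
  have p2: "prob_space (density lborel g2)" using gb by (simp add: good_def Hop_dens g2_def)
  define SB where "SB = (SUP B\<in>sets borel. \<bar>measure (density lborel g1) B - measure (density lborel g2) B\<bar>)"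
  have key: "\<bar>measure (Sop (Hop a)) A - measure (Sop (Hop b)) A\<bar> \<le> SB" if A: "A \<in> sets borel" for A
  proof -
    define fA where "fA = (\<lambda>\<gamma>. \<integral>\<^sup>+x. indicator X x * ennreal (s \<gamma> x) * indicator A x \<partial>lborel)"
    have fm: "fA \<in> borel_measurable borel"
      unfolding fA_def by (rule int_meas) (rule mprod[OF sm X borel_measurable_indicator[OF A]])
    have f1: "fA \<gamma> \<le> 1 \<or> (g1 \<gamma> = 0 \<and> g2 \<gamma> = 0)" for \<gamma>
    proof (cases "\<gamma> \<in> Y")
      case True
      have "fA \<gamma> \<le> (\<integral>\<^sup>+x. indicator X x * ennreal (s \<gamma> x) \<partial>lborel)"
        unfolding fA_def by (rule nn_integral_mono) (simp split: split_indicator)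
      then show ?thesis using s_pdf[OF True] by simp
    next
      case False then show ?thesis by (simp add: g1_def g2_def gH_def)
    qed
    have e: "emeasure (Sop (Hop c)) A = (\<integral>\<^sup>+\<gamma>. gH c \<gamma> * fA \<gamma> \<partial>lborel)" if c: "good X c" for c
    proof -
      have gc: "good Y (Hop c)" using H_good c by auto
      have "emeasure (Sop (Hop c)) A = (\<integral>\<^sup>+x. indicator A x \<partial>Sop (Hop c))"
        using A by (simp add: Sop_def)
      also have "\<dots> = (\<integral>\<^sup>+\<gamma>. fA \<gamma> \<partial>Hop c)"
        unfolding Sop_def fA_def by (rule kop_nn[OF good_sf[OF gc] good_sets[OF gc] sm X borel_measurable_indicator[OF A]])
      also have "\<dots> = (\<integral>\<^sup>+\<gamma>. gH c \<gamma> * fA \<gamma> \<partial>lborel)"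
        unfolding Hop_dens using gH_meas[OF c] fm by (intro nn_integral_density) auto
      finally show ?thesis .
    qed
    have ma: "measure (Sop (Hop a)) A = enn2real (\<integral>\<^sup>+\<gamma>. g1 \<gamma> * fA \<gamma> \<partial>lborel)"
      using e[OF a] by (simp add: measure_def g1_def)
    have mb: "measure (Sop (Hop b)) A = enn2real (\<integral>\<^sup>+\<gamma>. g2 \<gamma> * fA \<gamma> \<partial>lborel)"
      using e[OF b] by (simp add: measure_def g2_def)
    have i1: "measure (Sop (Hop a)) A - measure (Sop (Hop b)) A \<le> SB"
      unfolding ma mb SB_def by (rule AL[OF m1 m2 fm f1 p1 p2])
    have "measure (Sop (Hop b)) A - measure (Sop (Hop a)) A
       \<le> (SUP B\<in>sets borel. \<bar>measure (density lborel g2) B - measure (density lborel g1) B\<bar>)"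
      unfolding ma mb by (rule AL[OF m2 m1 fm _ p2 p1]) (use f1 in blast)
    also have "\<dots> = SB" unfolding SB_def by (simp add: abs_minus_commute)
    finally show ?thesis using i1 by linarith
  qed
  have "(SUP A\<in>sets (Sop (Hop a)). \<bar>measure (Sop (Hop a)) A - measure (Sop (Hop b)) A\<bar>) \<le> SB"
  proof (rule cSUP_least)
    show "sets (Sop (Hop a)) \<noteq> {}" using sets.empty_sets by blast
  next
    fix A assume "A \<in> sets (Sop (Hop a))"
    then have "A \<in> sets borel" by (simp add: Sop_def)
    then show "\<bar>measure (Sop (Hop a)) A - measure (Sop (Hop b)) A\<bar> \<le> SB" by (rule key)
  qed
  moreover have "tv (Hop a) (Hop b) = 2 * SB"
    unfolding tv_def SB_def by (simp add: Hop_dens g1_def g2_def)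
  ultimately show ?thesis unfolding tv_def by simp
qed

end

lemma mixture:
  fixes F :: "'a::euclidean_space measure \<Rightarrow> 'a measure" and P :: "'a measure \<Rightarrow> bool"
  assumes X: "X \<in> sets borel"
  and PF: "\<And>\<nu>. P \<nu> \<Longrightarrow> P (F \<nu>)"
  and Pret: "\<And>x. x \<in> X \<Longrightarrow> P (return borel x)"
  and PAE: "\<And>\<nu>. P \<nu> \<Longrightarrow> AE x in \<nu>. x \<in> X"
  and FG: "\<And>g. g \<in> borel_measurable borel \<Longrightarrow> \<exists>G \<in> borel_measurable borel. \<forall>\<nu>. P \<nu> \<longrightarrow> (\<integral>\<^sup>+y. g y \<partial>F \<nu>) = (\<integral>\<^sup>+y. G y \<partial>\<nu>)"
  shows "g \<in> borel_measurable borel \<Longrightarrow> (\<lambda>x. indicator X x * (\<integral>\<^sup>+y. g y \<partial>(F^^n) (return borel x))) \<in> borel_measurable borel \<and>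
    (\<forall>\<nu>. P \<nu> \<longrightarrow> (\<integral>\<^sup>+y. g y \<partial>(F^^n) \<nu>) = (\<integral>\<^sup>+x. indicator X x * (\<integral>\<^sup>+y. g y \<partial>(F^^n) (return borel x)) \<partial>\<nu>))"
proof (induction n arbitrary: g)
  case 0
  have eq: "(\<lambda>x. indicator X x * (\<integral>\<^sup>+y. g y \<partial>(F^^0) (return borel x))) = (\<lambda>x. indicator X x * g x)"
    using 0 by (simp add: nn_integral_return)
  show ?case unfolding eq
  proof
    show "(\<lambda>x. indicator X x * g x) \<in> borel_measurable borel"
      using 0 X by (intro borel_measurable_times_ennreal borel_measurable_indicator)
    show "\<forall>\<nu>. P \<nu> \<longrightarrow> (\<integral>\<^sup>+y. g y \<partial>(F^^0) \<nu>) = (\<integral>\<^sup>+x. indicator X x * g x \<partial>\<nu>)"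
    proof (intro allI impI)
      fix \<nu> assume "P \<nu>"
      show "(\<integral>\<^sup>+y. g y \<partial>(F^^0) \<nu>) = (\<integral>\<^sup>+x. indicator X x * g x \<partial>\<nu>)"
        using PAE[OF \<open>P \<nu>\<close>] by (simp, intro nn_integral_cong_AE) auto
    qed
  qed
next
  case (Suc n)
  obtain G where Gm: "G \<in> borel_measurable borel" and GE: "\<And>\<nu>. P \<nu> \<Longrightarrow> (\<integral>\<^sup>+y. g y \<partial>F \<nu>) = (\<integral>\<^sup>+y. G y \<partial>\<nu>)"
    using FG[OF Suc.prems] by blast
  have Ppow: "P ((F^^k) \<nu>)" if "P \<nu>" for k \<nu>
    using that by (induction k) (auto intro: PF)
  note IH = Suc.IH[OF Gm]
  have eq: "(\<lambda>x. indicator X x * (\<integral>\<^sup>+y. g y \<partial>(F^^Suc n) (return borel x))) = (\<lambda>x. indicator X x * (\<integral>\<^sup>+y. G y \<partial>(F^^n) (return borel x)))"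
  proof
    fix x
    show "indicator X x * (\<integral>\<^sup>+y. g y \<partial>(F^^Suc n) (return borel x)) = indicator X x * (\<integral>\<^sup>+y. G y \<partial>(F^^n) (return borel x))"
    proof (cases "x \<in> X")
      case True
      then show ?thesis using GE[OF Ppow[OF Pret[OF True]]] by simp
    qed simp
  qed
  show ?case unfolding eq
  proof
    show "(\<lambda>x. indicator X x * (\<integral>\<^sup>+y. G y \<partial>(F^^n) (return borel x))) \<in> borel_measurable borel"
      using IH by blast
    show "\<forall>\<nu>. P \<nu> \<longrightarrow> (\<integral>\<^sup>+y. g y \<partial>(F^^Suc n) \<nu>) = (\<integral>\<^sup>+x. indicator X x * (\<integral>\<^sup>+y. G y \<partial>(F^^n) (return borel x)) \<partial>\<nu>)"
    proof (intro allI impI)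
      fix \<nu> assume "P \<nu>"
      have "(\<integral>\<^sup>+y. g y \<partial>(F^^Suc n) \<nu>) = (\<integral>\<^sup>+y. G y \<partial>(F^^n) \<nu>)"
        using GE[OF Ppow[OF \<open>P \<nu>\<close>]] by simp
      also have "\<dots> = (\<integral>\<^sup>+x. indicator X x * (\<integral>\<^sup>+y. G y \<partial>(F^^n) (return borel x)) \<partial>\<nu>)"
        using IH \<open>P \<nu>\<close> by blast
      finally show "(\<integral>\<^sup>+y. g y \<partial>(F^^Suc n) \<nu>) = (\<integral>\<^sup>+x. indicator X x * (\<integral>\<^sup>+y. G y \<partial>(F^^n) (return borel x)) \<partial>\<nu>)" .
    qed
  qed
qed

lemma tv_bound:
  assumes p1: "prob_space \<mu>" and p2: "prob_space \<nu>" and A: "A \<in> sets \<mu>"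
  shows "\<bar>measure \<mu> A - measure \<nu> A\<bar> \<le> tv \<mu> \<nu> / 2"
proof -
  have "\<bar>measure \<mu> A - measure \<nu> A\<bar> \<le> (SUP A \<in> sets \<mu>. \<bar>measure \<mu> A - measure \<nu> A\<bar>)"
  proof (rule cSUP_upper[OF A])
    show "bdd_above ((\<lambda>B. \<bar>measure \<mu> B - measure \<nu> B\<bar>) ` sets \<mu>)"
    proof (rule bdd_aboveI2)
      fix A
      have "measure \<mu> A \<le> 1" "measure \<nu> A \<le> 1"
        using prob_space.prob_le_1[OF p1] prob_space.prob_le_1[OF p2] by auto
      then show "\<bar>measure \<mu> A - measure \<nu> A\<bar> \<le> 1"
        by (simp add: abs_le_iff) (smt (verit) measure_nonneg)
    qed
  qed
  then show ?thesis unfolding tv_def by simp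
qed

lemma meas_to: "sets M = sets borel \<Longrightarrow> f \<in> borel_measurable borel \<Longrightarrow> f \<in> borel_measurable M"
  by (subst measurable_cong_sets[of M borel]) auto

lemma pe: "prob_space M \<Longrightarrow> emeasure M A = ennreal (measure M A)"
  by (simp add: prob_space_def finite_measure.emeasure_eq_measure)

context setting begin

lemma ret_good: "x \<in> X \<Longrightarrow> good X (return borel x)"
  using X by (simp add: good_def prob_space_return)

lemma FG: assumes g: "g \<in> borel_measurable borel"
  shows "\<exists>G \<in> borel_measurable borel. \<forall>\<nu>. good X \<nu> \<longrightarrow> (\<integral>\<^sup>+y. g y \<partial>KX \<nu>) = (\<integral>\<^sup>+y. G y \<partial>\<nu>)"
proof -
  define inner where "inner = (\<lambda>\<gamma>. \<integral>\<^sup>+x'. indicator X x' * ennreal (s \<gamma> x') * g x' \<partial>lborel)"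
  have im: "inner \<in> borel_measurable borel"
    unfolding inner_def by (rule int_meas) (rule mprod[OF sm X g])
  define G where "G = (\<lambda>x. \<integral>\<^sup>+\<gamma>. indicator Y \<gamma> * ennreal (h x \<gamma>) * inner \<gamma> \<partial>lborel)"
  have Gm: "G \<in> borel_measurable borel"
    unfolding G_def by (rule int_meas) (rule mprod[OF hm Y im])
  have "(\<integral>\<^sup>+y. g y \<partial>KX \<nu>) = (\<integral>\<^sup>+y. G y \<partial>\<nu>)" if \<nu>: "good X \<nu>" for \<nu>
  proof -
    have gH: "good Y (Hop \<nu>)" by (rule H_good[OF \<nu>])
    have "(\<integral>\<^sup>+y. g y \<partial>KX \<nu>) = (\<integral>\<^sup>+y. g y \<partial>Sop (Hop \<nu>))" by (simp only: C1[OF \<nu>])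
    also have "\<dots> = (\<integral>\<^sup>+\<gamma>. inner \<gamma> \<partial>Hop \<nu>)"
      unfolding Sop_def inner_def by (rule kop_nn[OF good_sf[OF gH] good_sets[OF gH] sm X g])
    also have "\<dots> = (\<integral>\<^sup>+y. G y \<partial>\<nu>)"
      unfolding Hop_def G_def by (rule kop_nn[OF good_sf[OF \<nu>] good_sets[OF \<nu>] hm Y im])
    finally show ?thesis .
  qed
  then show ?thesis using Gm by blast
qed

lemma mixX: "g \<in> borel_measurable borel \<Longrightarrow> (\<lambda>x. indicator X x * (\<integral>\<^sup>+y. g y \<partial>(KX^^n) (return borel x))) \<in> borel_measurable borel \<and>
    (\<forall>\<nu>. good X \<nu> \<longrightarrow> (\<integral>\<^sup>+y. g y \<partial>(KX^^n) \<nu>) = (\<integral>\<^sup>+x. indicator X x * (\<integral>\<^sup>+y. g y \<partial>(KX^^n) (return borel x)) \<partial>\<nu>))"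
  by (rule mixture[OF X KX_good ret_good good_AE[OF _ X] FG])

lemma unique:
  assumes HX: "harris_ergodic X (kX Y s h) PiX" and r: "good X \<rho>" and fx: "KX \<rho> = \<rho>"
  shows "\<rho> = PiX"
proof -
  have PiX: "prob_space PiX" "sets PiX = sets borel" using HX by (auto simp: harris_ergodic_def)
  have conv: "\<And>x. x \<in> X \<Longrightarrow> (\<lambda>n. tv ((KX^^n) (return borel x)) PiX) \<longlonglongrightarrow> 0"
    using HX by (simp add: harris_ergodic_def kiter_def)
  have pr: "prob_space \<rho>" and sr: "sets \<rho> = sets borel" using r by (auto simp: good_def)
  interpret rho: prob_space \<rho> by (rule pr)
  have eqm: "measure \<rho> A = measure PiX A" if A: "A \<in> sets borel" for A
  proof -
    define fn where "fn = (\<lambda>n x. indicator X x * measure ((KX^^n) (return borel x)) A)"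
    define c where "c = measure PiX A"
    have fpow: "(KX^^n) \<rho> = \<rho>" for n by (induction n) (simp_all add: fx)
    have Ai: "indicator A \<in> borel_measurable borel" using A by simp
    have en: "ennreal (fn n x) = indicator X x * emeasure ((KX^^n) (return borel x)) A" for n x
    proof (cases "x \<in> X")
      case True
      then have "good X ((KX^^n) (return borel x))" by (intro KX_iter_good ret_good)
      then show ?thesis using True by (simp add: fn_def good_def pe)
    qed (simp add: fn_def)
    have fnm: "fn n \<in> borel_measurable borel" for n
    proof -
      have "(\<lambda>x. indicator X x * (\<integral>\<^sup>+y. indicator A y \<partial>(KX^^n) (return borel x))) \<in> borel_measurable borel"
        using mixX[OF Ai] by blast
      moreover have "(\<lambda>x. indicator X x * (\<integral>\<^sup>+y. indicator A y \<partial>(KX^^n) (return borel x))) = (\<lambda>x. ennreal (fn n x))"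
      proof
        fix x show "indicator X x * (\<integral>\<^sup>+y. indicator A y \<partial>(KX^^n) (return borel x)) = ennreal (fn n x)"
        proof (cases "x \<in> X")
          case True
          then have "good X ((KX^^n) (return borel x))" by (intro KX_iter_good ret_good)
          then have "sets ((KX^^n) (return borel x)) = sets borel" by (simp add: good_def)
          then show ?thesis using A by (simp add: en)
        qed (simp add: en)
      qed
      ultimately have "(\<lambda>x. enn2real (ennreal (fn n x))) \<in> borel_measurable borel"
        by (intro borel_measurable_enn2real) simp
      moreover have "\<And>x. fn n x \<ge> 0" by (simp add: fn_def)
      ultimately show ?thesis by simp
    qed
    have fnm': "fn n \<in> borel_measurable \<rho>" for n by (rule meas_to[OF sr fnm])
    have bnd: "\<And>n x. norm (fn n x) \<le> 1"
    proof -
      fix n x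
      show "norm (fn n x) \<le> 1"
      proof (cases "x \<in> X")
        case True
        then have "good X ((KX^^n) (return borel x))" by (intro KX_iter_good ret_good)
        then have "measure ((KX^^n) (return borel x)) A \<le> 1" by (simp add: good_def prob_space.prob_le_1)
        then show ?thesis using True by (simp add: fn_def)
      qed (simp add: fn_def)
    qed
    have intn: "integrable \<rho> (fn n)" for n
      by (rule rho.integrable_const_bound[where B=1]) (use bnd fnm' in auto)
    have mint: "measure \<rho> A = integral\<^sup>L \<rho> (fn n)" for n
    proof -
      have "emeasure \<rho> A = emeasure ((KX^^n) \<rho>) A" by (simp add: fpow)
      also have "\<dots> = (\<integral>\<^sup>+y. indicator A y \<partial>(KX^^n) \<rho>)"
        using A KX_iter_good[OF r, of n] by (simp add: good_def)
      also have "\<dots> = (\<integral>\<^sup>+x. indicator X x * (\<integral>\<^sup>+y. indicator A y \<partial>(KX^^n) (return borel x)) \<partial>\<rho>)"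
        using mixX[OF Ai] r by blast
      also have "\<dots> = (\<integral>\<^sup>+x. ennreal (fn n x) \<partial>\<rho>)"
      proof (rule nn_integral_cong)
        fix x show "indicator X x * (\<integral>\<^sup>+y. indicator A y \<partial>(KX^^n) (return borel x)) = ennreal (fn n x)"
        proof (cases "x \<in> X")
          case True
          then have "good X ((KX^^n) (return borel x))" by (intro KX_iter_good ret_good)
          then have "sets ((KX^^n) (return borel x)) = sets borel" by (simp add: good_def)
          then show ?thesis using A by (simp add: en)
        qed (simp add: en)
      qed
      also have "\<dots> = ennreal (integral\<^sup>L \<rho> (fn n))"
        by (rule nn_integral_eq_integral[OF intn]) (simp add: fn_def)
      finally have "ennreal (measure \<rho> A) = ennreal (integral\<^sup>L \<rho> (fn n))"
        by (simp add: rho.emeasure_eq_measure)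
      moreover have "integral\<^sup>L \<rho> (fn n) \<ge> 0" by (rule integral_nonneg_AE) (simp add: fn_def)
      ultimately show ?thesis by simp
    qed
    define fl where "fl = (\<lambda>x. indicator X x * c)"
    have lim: "(\<lambda>n. fn n x) \<longlonglongrightarrow> fl x" for x
    proof (cases "x \<in> X")
      case True
      have "(\<lambda>n. measure ((KX^^n) (return borel x)) A - c) \<longlonglongrightarrow> 0"
      proof (rule Lim_null_comparison)
        show "\<forall>\<^sub>F n in sequentially. norm (measure ((KX^^n) (return borel x)) A - c) \<le> tv ((KX^^n) (return borel x)) PiX / 2"
        proof (rule always_eventually, rule allI)
          fix n
          have "good X ((KX^^n) (return borel x))" using True by (intro KX_iter_good ret_good)
          then show "norm (measure ((KX^^n) (return borel x)) A - c) \<le> tv ((KX^^n) (return borel x)) PiX / 2"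
            unfolding c_def real_norm_def using A PiX by (intro tv_bound) (auto simp: good_def)
        qed
        show "(\<lambda>n. tv ((KX^^n) (return borel x)) PiX / 2) \<longlonglongrightarrow> 0"
          using tendsto_divide_zero[OF conv[OF True], of 2] by simp
      qed
      then have "(\<lambda>n. measure ((KX^^n) (return borel x)) A) \<longlonglongrightarrow> c" by (rule Lim_null[THEN iffD2])
      then show ?thesis using True by (simp add: fn_def fl_def)
    qed (simp add: fn_def fl_def)
    have "(\<lambda>n. integral\<^sup>L \<rho> (fn n)) \<longlonglongrightarrow> integral\<^sup>L \<rho> fl"
    proof (rule integral_dominated_convergence[where w="\<lambda>x. 1"])
      show "fl \<in> borel_measurable \<rho>" unfolding fl_def using X
        by (intro meas_to[OF sr] borel_measurable_times borel_measurable_const borel_measurable_indicator)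
    qed (use fnm' lim bnd in auto)
    moreover have "(\<lambda>n. integral\<^sup>L \<rho> (fn n)) = (\<lambda>n. measure \<rho> A)" using mint by simp
    ultimately have "measure \<rho> A = integral\<^sup>L \<rho> fl" by (simp add: LIMSEQ_const_iff)
    also have "integral\<^sup>L \<rho> fl = measure \<rho> X * c"
      unfolding fl_def using X sr by simp
    also have "measure \<rho> X = 1" using r by (simp add: good_def rho.emeasure_eq_measure)
    finally show ?thesis by (simp add: c_def)
  qed
  show ?thesis
  proof (rule measure_eqI)
    show "sets \<rho> = sets PiX" using sr PiX by simp
    fix A assume "A \<in> sets \<rho>"
    then have "A \<in> sets borel" using sr by simp
    then show "emeasure \<rho> A = emeasure PiX A"
      using eqm PiX(1) by (simp add: rho.emeasure_eq_measure pe)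
  qed
qed

end

theorem proposition14:
  fixes X :: "'a::euclidean_space set" and Y :: "'b::euclidean_space set"
    and s :: "'b \<Rightarrow> 'a \<Rightarrow> real" and h :: "'a \<Rightarrow> 'b \<Rightarrow> real"
    and PiX :: "'a measure" and PiY :: "'b measure"
    and R :: "'b \<Rightarrow> nat \<Rightarrow> real"
  assumes X: "X \<in> sets borel" and Y: "Y \<in> sets borel"
    and s_meas: "(\<lambda>(\<gamma>, x). s \<gamma> x) \<in> borel_measurable borel"
    and h_meas: "(\<lambda>(x, \<gamma>). h x \<gamma>) \<in> borel_measurable borel"
    and s_nonneg: "\<And>\<gamma> x. s \<gamma> x \<ge> 0" and h_nonneg: "\<And>x \<gamma>. h x \<gamma> \<ge> 0"
    and s_pdf: "\<And>\<gamma>. \<gamma> \<in> Y \<Longrightarrow> (\<integral>\<^sup>+ x. indicator X x * ennreal (s \<gamma> x) \<partial>lborel) = 1"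
    and h_pdf: "\<And>x. x \<in> X \<Longrightarrow> (\<integral>\<^sup>+ \<gamma>. indicator Y \<gamma> * ennreal (h x \<gamma>) \<partial>lborel) = 1"
    and HX: "harris_ergodic X (kX Y s h) PiX"
    and HY: "harris_ergodic Y (kY X s h) PiY"
    and R_pos: "\<And>\<gamma> m. \<gamma> \<in> Y \<Longrightarrow> R \<gamma> m > 0"
    and R_meas: "\<And>m. (\<lambda>\<gamma>. R \<gamma> m) \<in> borel_measurable borel"
    and R_bound: "\<And>nuY m. prob_space nuY \<Longrightarrow> sets nuY = sets borel \<Longrightarrow> measure nuY Y = 1 \<Longrightarrow>
        ennreal (tv (kiter Y (kY X s h) m nuY) PiY) \<le> (\<integral>\<^sup>+ \<gamma>. ennreal (R \<gamma> m) \<partial>nuY)"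
  shows "\<And>\<nu> m. prob_space \<nu> \<Longrightarrow> sets \<nu> = sets borel \<Longrightarrow> measure \<nu> X = 1 \<Longrightarrow> m \<ge> 1 \<Longrightarrow>
        ennreal (tv (kiter X (kX Y s h) m \<nu>) PiX)
          \<le> (\<integral>\<^sup>+ x. (\<integral>\<^sup>+ \<gamma>. indicator Y \<gamma> * ennreal (R \<gamma> (m - 1) * h x \<gamma>) \<partial>lborel) \<partial>\<nu>)"
proof -
  interpret setting X Y s h
    by (rule setting.intro[OF X Y s_meas h_meas s_nonneg h_nonneg s_pdf h_pdf])
  fix \<nu> :: "'a measure" and m :: nat
  assume p\<nu>: "prob_space \<nu>" and s\<nu>: "sets \<nu> = sets borel" and m\<nu>: "measure \<nu> X = 1" and m: "m \<ge> 1"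
  have g\<nu>: "good X \<nu>" using p\<nu> s\<nu> m\<nu> by (simp add: good_def pe)
  obtain n where mn: "m = Suc n" using m by (cases m) auto
  have gY: "good Y PiY" and fY: "KY PiY = PiY"
    using HY by (auto simp: harris_ergodic_def good_def pe)
  define \<rho> where "\<rho> = Sop PiY"
  have g\<rho>: "good X \<rho>" unfolding \<rho>_def by (rule S_good[OF gY])
  have PiYH: "PiY = Hop \<rho>" unfolding \<rho>_def using C2[OF gY] fY by simp
  have "KX \<rho> = Sop (Hop \<rho>)" by (rule C1[OF g\<rho>])
  also have "\<dots> = \<rho>" using PiYH \<rho>_def by simp
  finally have "\<rho> = PiX" by (rule unique[OF HX g\<rho>])
  obtain \<rho>' where g\<rho>': "good X \<rho>'" and e\<rho>': "kiter Y (kY X s h) n (Hop \<nu>) = Hop \<rho>'"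
    using kiterY_H[OF g\<nu>] by blast
  have "tv (kiter X (kX Y s h) m \<nu>) PiX = tv (Sop (Hop \<rho>')) (Sop (Hop \<rho>))"
  proof -
    have e1: "Hop \<rho> = PiY" by (simp only: PiYH)
    have e2: "Sop (Hop \<rho>) = PiX" unfolding e1 using \<rho>_def \<open>\<rho> = PiX\<close> by (simp only:)
    show ?thesis unfolding e2 mn kiter_X_eq[OF g\<nu>, of n] e\<rho>' ..
  qed
  also have "\<dots> \<le> tv (Hop \<rho>') (Hop \<rho>)" by (rule contr[OF g\<rho>' g\<rho>])
  also have "\<dots> = tv (kiter Y (kY X s h) n (Hop \<nu>)) PiY" using e\<rho>' PiYH by simp
  finally have "ennreal (tv (kiter X (kX Y s h) m \<nu>) PiX) \<le> ennreal (tv (kiter Y (kY X s h) n (Hop \<nu>)) PiY)"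
    by (rule ennreal_leI)
  also have "\<dots> \<le> (\<integral>\<^sup>+ \<gamma>. ennreal (R \<gamma> n) \<partial>Hop \<nu>)"
  proof (rule R_bound)
    have gH: "good Y (Hop \<nu>)" by (rule H_good[OF g\<nu>])
    then show "prob_space (Hop \<nu>)" "sets (Hop \<nu>) = sets borel" by (auto simp: good_def)
    show "measure (Hop \<nu>) Y = 1" using gH by (simp add: good_def measure_def)
  qed
  also have "\<dots> = (\<integral>\<^sup>+x. (\<integral>\<^sup>+\<gamma>. indicator Y \<gamma> * ennreal (h x \<gamma>) * ennreal (R \<gamma> n) \<partial>lborel) \<partial>\<nu>)"
    unfolding Hop_def
  proof (rule kop_nn[OF good_sf[OF g\<nu>] good_sets[OF g\<nu>] hm Y])
    show "(\<lambda>\<gamma>. ennreal (R \<gamma> n)) \<in> borel_measurable borel"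
      by (rule measurable_compose[OF R_meas measurable_ennreal])
  qed
  also have "\<dots> = (\<integral>\<^sup>+ x. (\<integral>\<^sup>+ \<gamma>. indicator Y \<gamma> * ennreal (R \<gamma> (m - 1) * h x \<gamma>) \<partial>lborel) \<partial>\<nu>)"
  proof (intro nn_integral_cong)
    fix x \<gamma>
    show "indicator Y \<gamma> * ennreal (h x \<gamma>) * ennreal (R \<gamma> n) = indicator Y \<gamma> * ennreal (R \<gamma> (m - 1) * h x \<gamma>)"
    proof (cases "\<gamma> \<in> Y")
      case True
      then have "R \<gamma> n \<ge> 0" using R_pos[OF True, of n] by simp
      then show ?thesis using True mn h_nonneg[of x \<gamma>] by (simp add: ennreal_mult mult.commute)
    qed simp
  qed
  finally show "ennreal (tv (kiter X (kX Y s h) m \<nu>) PiX)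
          \<le> (\<integral>\<^sup>+ x. (\<integral>\<^sup>+ \<gamma>. indicator Y \<gamma> * ennreal (R \<gamma> (m - 1) * h x \<gamma>) \<partial>lborel) \<partial>\<nu>)" .
qed

end
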